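(* Let $\Delta\ge 1$ and $s\ge 1$ be integers, $r=s\Delta$, and let $\sigma=(\Delta,\Delta,\ldots,\Delta)$ be the partition of $r$ into $s$ parts all equal to $\Delta$. Let $n\ge (r+1)^2$ and $q\ge r\Delta$, and let $H=H(n,r,q\mid\sigma)$. Then \[\nu(H)=\left\lfloor \frac{n\,(q-(q \bmod \Delta))}{r}\right\rfloor,\] where $q\bmod\Delta$ denotes the remainder of $q$ upon division by $\Delta$.
   Context: A $\sigma$-hypergraph $H=H(n,r,q\mid\sigma)$, for a partition $\sigma=(a_1,\ldots,a_s)$ of $r$, is the $r$-uniform hypergraph whose vertex set is the disjoint union of $n$ classes $V_1,\ldots,V_n$, each of size $q$; an $r$-subset $K$ of vertices is an edge iff the multiset of non-zero values $|K\cap V_i|$ ($1\le i\le n$) equals $\sigma$. A matching is a set of pairwise vertex-disjoint edges; $\nu(H)$ is the maximum size of a matching in $H$. *)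

theory Defs
  imports Main "HOL-Library.Multiset"
begin

definition sh_vertices :: "nat \<Rightarrow> nat \<Rightarrow> (nat \<times> nat) set" where
  "sh_vertices n q = {..<n} \<times> {..<q}"

definition sh_class :: "nat \<Rightarrow> nat \<Rightarrow> (nat \<times> nat) set" where
  "sh_class q i = {i} \<times> {..<q}"

definition sh_profile :: "nat \<Rightarrow> nat \<Rightarrow> (nat \<times> nat) set \<Rightarrow> nat multiset" where
  "sh_profile n q K =
     filter_mset (\<lambda>c. c \<noteq> 0) (mset (map (\<lambda>i. card (K \<inter> sh_class q i)) [0..<n]))"

text \<open>Edges of the sigma-hypergraph H(n,r,q|sigma); sigma is a partition of r given as a multiset.\<close>
definition sh_edges :: "nat \<Rightarrow> nat \<Rightarrow> nat \<Rightarrow> nat multiset \<Rightarrow> (nat \<times> nat) set set" where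
  "sh_edges n r q \<sigma> =
     {K. K \<subseteq> sh_vertices n q \<and> card K = r \<and> sh_profile n q K = \<sigma>}"

definition is_matching :: "'v set set \<Rightarrow> 'v set set \<Rightarrow> bool" where
  "is_matching E M \<longleftrightarrow> M \<subseteq> E \<and> (\<forall>e\<in>M. \<forall>f\<in>M. e \<noteq> f \<longrightarrow> e \<inter> f = {})"

definition matching_number :: "'v set set \<Rightarrow> nat" where
  "matching_number E = Max {card M | M. is_matching E M \<and> finite M}"

end

theory Submission
  imports Defs
begin

lemma card_classes:
  assumes "K \<subseteq> sh_vertices n q"
  shows "card K = (\<Sum>i<n. card (K \<inter> sh_class q i))"
proof -
  have fin: "finite K" using assms finite_subset unfolding sh_vertices_def by blast
  have eq: "K = (\<Union>i<n. K \<inter> sh_class q i)"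
    using assms unfolding sh_vertices_def sh_class_def by auto
  have "card (\<Union>i<n. K \<inter> sh_class q i) = (\<Sum>i<n. card (K \<inter> sh_class q i))"
  proof (rule card_UN_disjoint)
    show "\<forall>i\<in>{..<n}. finite (K \<inter> sh_class q i)" using fin by blast
    show "\<forall>i\<in>{..<n}. \<forall>j\<in>{..<n}. i \<noteq> j \<longrightarrow> (K \<inter> sh_class q i) \<inter> (K \<inter> sh_class q j) = {}"
      by (auto simp: sh_class_def)
  qed simp
  with eq show ?thesis by simp
qed

lemma edge_class_card:
  assumes "K \<in> sh_edges n r q (replicate_mset s \<Delta>)" and "i < n"
  shows "card (K \<inter> sh_class q i) = 0 \<or> card (K \<inter> sh_class q i) = \<Delta>"
proof (rule disjCI)
  assume c: "card (K \<inter> sh_class q i) \<noteq> \<Delta>"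
  show "card (K \<inter> sh_class q i) = 0"
  proof (rule ccontr)
    assume nz: "card (K \<inter> sh_class q i) \<noteq> 0"
    have "card (K \<inter> sh_class q i) \<in> set (map (\<lambda>i. card (K \<inter> sh_class q i)) [0..<n])"
      unfolding set_map by (rule imageI) (use assms(2) in simp)
    then have "card (K \<inter> sh_class q i) \<in># sh_profile n q K"
      unfolding sh_profile_def using nz by simp
    then have "card (K \<inter> sh_class q i) \<in># replicate_mset s \<Delta>"
      using assms(1) unfolding sh_edges_def by auto
    with c show False by (auto split: if_splits)
  qed
qed

lemma dvd_le_round:
  fixes c q D :: nat
  assumes "D dvd c" "c \<le> q" "D > 0"
  shows "c \<le> q - q mod D"
proof -
  obtain t where t: "c = D * t" using assms(1) by blast
  have "t = c div D" using t assms(3) by simp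
  also have "\<dots> \<le> q div D" using assms(2) by (rule div_le_mono)
  finally have "D * t \<le> D * (q div D)" by simp
  moreover have "q - q mod D = D * (q div D)" by (simp add: minus_mod_eq_mult_div)
  ultimately show ?thesis using t by simp
qed

lemma upper:
  assumes "\<Delta> \<ge> 1" "r = s * \<Delta>" "s \<ge> 1"
    and M: "is_matching (sh_edges n r q (replicate_mset s \<Delta>)) M" "finite M"
  shows "card M \<le> (n * (q - q mod \<Delta>)) div r"
proof -
  let ?E = "sh_edges n r q (replicate_mset s \<Delta>)"
  have ME: "\<And>e. e \<in> M \<Longrightarrow> e \<in> ?E" using M unfolding is_matching_def by auto
  have dis: "\<And>e f. e \<in> M \<Longrightarrow> f \<in> M \<Longrightarrow> e \<noteq> f \<Longrightarrow> e \<inter> f = {}"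
    using M unfolding is_matching_def by auto
  have finV: "finite (sh_vertices n q)" unfolding sh_vertices_def by simp
  have sub: "\<And>e. e \<in> M \<Longrightarrow> e \<subseteq> sh_vertices n q" using ME unfolding sh_edges_def by auto
  have fine: "\<And>e. e \<in> M \<Longrightarrow> finite e" using sub finV finite_subset by blast
  have cr: "\<And>e. e \<in> M \<Longrightarrow> card e = r" using ME unfolding sh_edges_def by auto
  let ?U = "\<Union>M"
  have "card ?U = sum card M"
    proof (rule card_Union_disjoint)
    show "pairwise disjnt M" unfolding pairwise_def disjnt_def using dis by blast
  qed (rule fine)
  also have "\<dots> = (\<Sum>e\<in>M. r)" by (rule sum.cong[OF refl]) (rule cr)
  also have "\<dots> = card M * r" by simp
  finally have cU: "card ?U = card M * r" .
  have Usub: "?U \<subseteq> sh_vertices n q" using sub by auto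
  have "card ?U = (\<Sum>i<n. card (?U \<inter> sh_class q i))" using Usub by (rule card_classes)
  also have "\<dots> \<le> (\<Sum>i<n. q - q mod \<Delta>)"
  proof (rule sum_mono)
    fix i assume i: "i \<in> {..<n}"
    have eq: "?U \<inter> sh_class q i = (\<Union>e\<in>M. e \<inter> sh_class q i)" by blast
    have cUN: "card (\<Union>e\<in>M. e \<inter> sh_class q i) = (\<Sum>e\<in>M. card (e \<inter> sh_class q i))"
    proof (rule card_UN_disjoint)
      show "finite M" by (rule M(2))
      show "\<forall>e\<in>M. finite (e \<inter> sh_class q i)" using fine by blast
      show "\<forall>e\<in>M. \<forall>f\<in>M. e \<noteq> f \<longrightarrow> (e \<inter> sh_class q i) \<inter> (f \<inter> sh_class q i) = {}"
        using dis by blast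
    qed
    have dsum: "\<Delta> dvd (\<Sum>e\<in>M. card (e \<inter> sh_class q i))"
    proof (rule dvd_sum)
      fix e assume "e \<in> M"
      have "card (e \<inter> sh_class q i) = 0 \<or> card (e \<inter> sh_class q i) = \<Delta>"
        by (rule edge_class_card[OF ME[OF \<open>e \<in> M\<close>]]) (use i in simp)
      then show "\<Delta> dvd card (e \<inter> sh_class q i)" by (metis dvd_0_right dvd_refl)
    qed
    have d: "\<Delta> dvd card (?U \<inter> sh_class q i)" unfolding eq cUN by (rule dsum)
    have "card (?U \<inter> sh_class q i) \<le> card (sh_class q i)"
      by (rule card_mono) (auto simp: sh_class_def)
    also have "\<dots> = q" by (simp add: sh_class_def)
    finally have le: "card (?U \<inter> sh_class q i) \<le> q" .
    show "card (?U \<inter> sh_class q i) \<le> q - q mod \<Delta>"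
      by (rule dvd_le_round[OF d le]) (use assms(1) in simp)
  qed
  also have "\<dots> = n * (q - q mod \<Delta>)" by simp
  finally have "card M * r \<le> n * (q - q mod \<Delta>)" using cU by simp
  moreover have "r > 0" using assms by simp
  ultimately show ?thesis by (simp add: less_eq_div_iff_mult_less_eq)
qed

lemma profile_lemma:
  fixes D :: nat
  assumes "R \<subseteq> {..<n}" "D > 0"
  shows "filter_mset (\<lambda>c. c \<noteq> 0) (mset (map (\<lambda>i. if i \<in> R then D else 0) [0..<n]))
         = replicate_mset (card R) D"
proof -
  have "filter_mset (\<lambda>c. c \<noteq> 0) (mset (map (\<lambda>i. if i \<in> R then D else 0) [0..<n]))
      = mset (filter (\<lambda>c. c \<noteq> 0) (map (\<lambda>i. if i \<in> R then D else 0) [0..<n]))"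
    by simp
  also have "filter (\<lambda>c. c \<noteq> 0) (map (\<lambda>i. if i \<in> R then D else 0) [0..<n])
      = map (\<lambda>i. D) (filter (\<lambda>i. i \<in> R) [0..<n])"
    unfolding filter_map using assms(2) by (induction n) (auto simp: comp_def)
  also have "\<dots> = replicate (length (filter (\<lambda>i. i \<in> R) [0..<n])) D"
    by (rule map_replicate_const)
  also have "length (filter (\<lambda>i. i \<in> R) [0..<n]) = card R"
  proof -
    have "length (filter (\<lambda>i. i \<in> R) [0..<n]) = card (set (filter (\<lambda>i. i \<in> R) [0..<n]))"
      by (rule distinct_card[symmetric]) simp
    also have "set (filter (\<lambda>i. i \<in> R) [0..<n]) = R" using assms(1) by auto
    finally show ?thesis .
  qed
  finally show ?thesis by simp
qed

lemma window_inj: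
  fixes n s a :: nat
  assumes "s \<le> n"
  shows "inj_on (\<lambda>p. p mod n) {a..<a+s}"
proof (rule inj_onI)
  fix x y assume x: "x \<in> {a..<a+s}" and y: "y \<in> {a..<a+s}" and e: "x mod n = y mod n"
  show "x = y"
  proof (rule ccontr)
    assume ne: "x \<noteq> y"
    show False
    proof (cases "x < y")
      case True
      then have "n dvd y - x" using e mod_eq_dvd_iff_nat[of x y n] by simp
      moreover have "0 < y - x" "y - x < n" using True x y assms by auto
      ultimately show False using dvd_imp_le by fastforce
    next
      case False
      then have "y < x" using ne by simp
      then have "n dvd x - y" using e mod_eq_dvd_iff_nat[of y x n] by simp
      moreover have "0 < x - y" "x - y < n" using \<open>y < x\<close> x y assms by auto
      ultimately show False using dvd_imp_le by fastforce
    qed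
  qed
qed

definition gmap :: "nat \<Rightarrow> nat \<Rightarrow> nat \<times> nat \<Rightarrow> nat \<times> nat" where
  "gmap n D = (\<lambda>(p,k). (p mod n, D * (p div n) + k))"

lemma gmap_inj:
  assumes "D > 0"
  shows "inj_on (gmap n D) (UNIV \<times> {..<D})"
proof (rule inj_onI)
  fix x y assume x: "x \<in> UNIV \<times> {..<D}" and y: "y \<in> UNIV \<times> {..<D}" and e: "gmap n D x = gmap n D y"
  obtain p k where xp: "x = (p,k)" by (cases x)
  obtain p' k' where yp: "y = (p',k')" by (cases y)
  have k: "k < D" "k' < D" using x y xp yp by auto
  have m: "p mod n = p' mod n" and v: "D * (p div n) + k = D * (p' div n) + k'"
    using e xp yp by (auto simp: gmap_def)
  have "(D * (p div n) + k) div D = p div n" using k assms by simp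
  moreover have "(D * (p' div n) + k') div D = p' div n" using k assms by simp
  ultimately have d: "p div n = p' div n" using v by metis
  then have "k = k'" using v by simp
  moreover have "p = p'" using m d by (metis div_mult_mod_eq)
  ultimately show "x = y" using xp yp by simp
qed

lemma edge_ok:
  fixes D s n q m j r :: nat
  assumes D: "D > 0" and sn: "s \<le> n" and spos: "s > 0" and jm: "j * s + s \<le> n * m" and mq: "m * D \<le> q"
    and r: "r = s * D"
  shows "gmap n D ` ({j*s..<j*s+s} \<times> {..<D}) \<in> sh_edges n r q (replicate_mset s D)"
proof -
  let ?W = "{j*s..<j*s+s}"
  let ?E = "gmap n D ` (?W \<times> {..<D})"
  have inj: "inj_on (gmap n D) (?W \<times> {..<D})"
    using gmap_inj[OF D] by (rule inj_on_subset) auto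
  have sub: "?E \<subseteq> sh_vertices n q"
  proof
    fix v assume "v \<in> ?E"
    then obtain p k where pk: "p \<in> ?W" "k < D" "v = (p mod n, D * (p div n) + k)"
      by (auto simp: gmap_def)
    have npos: "n > 0" using sn spos by simp
    have "p < n * m" using pk jm by auto
    then have "p div n < m" using npos by (simp add: div_less_iff_less_mult mult.commute)
    then have "p div n + 1 \<le> m" by simp
    then have "D * (p div n + 1) \<le> D * m" by (rule mult_le_mono2)
    then have "D * (p div n) + k < q" using pk mq by (simp add: algebra_simps)
    moreover have "p mod n < n" using npos by simp
    ultimately show "v \<in> sh_vertices n q" using pk by (simp add: sh_vertices_def)
  qed
  have card: "card ?E = r" using card_image[OF inj] r by (simp add: card_cartesian_product)
  let ?R = "(\<lambda>p. p mod n) ` ?W"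
  have Rsub: "?R \<subseteq> {..<n}" using sn by auto
  have cardR: "card ?R = s" using card_image[OF window_inj[OF sn]] by simp
  have cls: "card (?E \<inter> sh_class q i) = (if i \<in> ?R then D else 0)" if i: "i < n" for i
  proof -
    let ?P = "{p \<in> ?W. p mod n = i}"
    have A: "gmap n D ` (?P \<times> {..<D}) \<subseteq> ?E" by auto
    have B: "\<And>v. v \<in> gmap n D ` (?P \<times> {..<D}) \<Longrightarrow> fst v = i" by (auto simp: gmap_def)
    have "?E \<inter> sh_class q i = gmap n D ` (?P \<times> {..<D})"
    proof
      show "?E \<inter> sh_class q i \<subseteq> gmap n D ` (?P \<times> {..<D})"
        by (auto simp: gmap_def sh_class_def)
      show "gmap n D ` (?P \<times> {..<D}) \<subseteq> ?E \<inter> sh_class q i"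
      proof
        fix v assume v: "v \<in> gmap n D ` (?P \<times> {..<D})"
        then have "v \<in> sh_vertices n q" using A sub by blast
        then have "snd v < q" by (auto simp: sh_vertices_def)
        moreover have "fst v = i" using B v by blast
        ultimately have "v \<in> sh_class q i" by (cases v) (simp add: sh_class_def)
        then show "v \<in> ?E \<inter> sh_class q i" using A v by blast
      qed
    qed
    moreover have "inj_on (gmap n D) (?P \<times> {..<D})" using inj by (rule inj_on_subset) auto
    ultimately have "card (?E \<inter> sh_class q i) = card ?P * D"
      by (simp add: card_image card_cartesian_product)
    moreover have "card ?P = card ((\<lambda>p. p mod n) ` ?P)"
    proof -
      have "inj_on (\<lambda>p. p mod n) ?P" by (rule inj_on_subset[OF window_inj[OF sn]]) auto
      then show ?thesis by (rule card_image[symmetric])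
    qed
    moreover have "(\<lambda>p. p mod n) ` ?P = ?R \<inter> {i}" by auto
    ultimately show ?thesis by auto
  qed
  have mapeq: "map (\<lambda>i. card (?E \<inter> sh_class q i)) [0..<n] = map (\<lambda>i. if i \<in> ?R then D else 0) [0..<n]"
  proof (rule map_cong[OF refl])
    fix i assume "i \<in> set [0..<n]"
    then have "i < n" by simp
    then show "card (?E \<inter> sh_class q i) = (if i \<in> ?R then D else 0)" by (rule cls)
  qed
  have prof: "sh_profile n q ?E = replicate_mset s D"
    unfolding sh_profile_def mapeq using profile_lemma[OF Rsub D] cardR by simp
  show ?thesis unfolding sh_edges_def using sub card prof by blast
qed


theorem theorem3p7:
  fixes \<Delta> s r n q :: nat
  assumes "\<Delta> \<ge> 1" and "s \<ge> 1" and "r = s * \<Delta>"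
    and "n \<ge> (r + 1)^2" and "q \<ge> r * \<Delta>"
  shows "matching_number (sh_edges n r q (replicate_mset s \<Delta>))
           = (n * (q - q mod \<Delta>)) div r"
proof -
  let ?E = "sh_edges n r q (replicate_mset s \<Delta>)"
  define m where "m = q div \<Delta>"
  define N where "N = n * m div s"
  have Dpos: "\<Delta> > 0" using assms(1) by simp
  have spos: "s > 0" using assms(2) by simp
  have Q: "q - q mod \<Delta> = \<Delta> * m" unfolding m_def by (simp add: minus_mod_eq_mult_div)
  have target: "(n * (q - q mod \<Delta>)) div r = N"
  proof -
    have "n * (q - q mod \<Delta>) div r = (n * m) * \<Delta> div (s * \<Delta>)"
      using Q assms(3) by (simp add: ac_simps)
    also have "\<dots> = n * m div s" using Dpos by (rule div_mult_mult2[OF order.strict_implies_not_eq[symmetric]])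
    finally show ?thesis unfolding N_def .
  qed
  have rs: "s \<le> r" using assms(1,3) by simp
  have "r + 1 \<le> (r + 1)^2" by (simp add: power2_eq_square)
  then have sn: "s \<le> n" using rs assms(4) by linarith
  have mq: "m * \<Delta> \<le> q" unfolding m_def by (rule div_times_less_eq_dividend)
  define Ed where "Ed j = gmap n \<Delta> ` ({j*s..<j*s+s} \<times> {..<\<Delta>})" for j
  have jm: "j * s + s \<le> n * m" if "j < N" for j
  proof -
    have "j * s + s = (j + 1) * s" by simp
    also have "\<dots> \<le> N * s" using that by (intro mult_le_mono1) simp
    also have "\<dots> \<le> n * m" unfolding N_def by (rule div_times_less_eq_dividend)
    finally show ?thesis .
  qed
  have edges: "Ed j \<in> ?E" if "j < N" for j
    unfolding Ed_def by (rule edge_ok[OF Dpos sn spos jm[OF that] mq assms(3)])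
  have inj: "inj_on (gmap n \<Delta>) (UNIV \<times> {..<\<Delta>})" by (rule gmap_inj[OF Dpos])
  have disj: "Ed j \<inter> Ed j' = {}" if "j \<noteq> j'" for j j'
  proof -
    have w: "{j*s..<j*s+s} \<inter> {j'*s..<j'*s+s} = {}"
    proof (cases "j < j'")
      case True
      then have "j * s + s \<le> j' * s" by (metis Suc_leI add.commute mult_Suc mult_le_mono1)
      then show ?thesis by auto
    next
      case False
      then have "j' < j" using that by simp
      then have "j' * s + s \<le> j * s" by (metis Suc_leI add.commute mult_Suc mult_le_mono1)
      then show ?thesis by auto
    qed
    have "Ed j \<inter> Ed j' = gmap n \<Delta> ` (({j*s..<j*s+s} \<times> {..<\<Delta>}) \<inter> ({j'*s..<j'*s+s} \<times> {..<\<Delta>}))"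
      unfolding Ed_def by (rule inj_on_image_Int[OF inj, symmetric]) auto
    also have "({j*s..<j*s+s} \<times> {..<\<Delta>}) \<inter> ({j'*s..<j'*s+s} \<times> {..<\<Delta>}) = {}"
      using w by blast
    finally show ?thesis by simp
  qed
  have ne: "Ed j \<noteq> {}" for j
  proof -
    have "(j*s, 0) \<in> {j*s..<j*s+s} \<times> {..<\<Delta>}" using spos Dpos by simp
    then show ?thesis unfolding Ed_def by blast
  qed
  have injE: "inj_on Ed {..<N}"
  proof (rule inj_onI)
    fix x y assume "x \<in> {..<N}" "y \<in> {..<N}" "Ed x = Ed y"
    then show "x = y" using disj[of x y] ne[of x] by auto
  qed
  define Mc where "Mc = Ed ` {..<N}"
  have Mcm: "is_matching ?E Mc"
    unfolding is_matching_def
  proof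
    show "Mc \<subseteq> ?E" unfolding Mc_def using edges by auto
    show "\<forall>e\<in>Mc. \<forall>f\<in>Mc. e \<noteq> f \<longrightarrow> e \<inter> f = {}"
    proof (intro ballI impI)
      fix e f assume e: "e \<in> Mc" and f: "f \<in> Mc" and ef: "e \<noteq> f"
      obtain j where j: "e = Ed j" using e unfolding Mc_def by blast
      obtain j' where j': "f = Ed j'" using f unfolding Mc_def by blast
      have "j \<noteq> j'" using ef j j' by blast
      then show "e \<inter> f = {}" unfolding j j' by (rule disj)
    qed
  qed
  have cMc: "card Mc = N" unfolding Mc_def using card_image[OF injE] by simp
  have fMc: "finite Mc" unfolding Mc_def by simp
  let ?S = "{card M | M. is_matching ?E M \<and> finite M}"
  have bound: "\<forall>y\<in>?S. y \<le> N"
  proof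
    fix y assume "y \<in> ?S"
    then obtain M where M: "y = card M" "is_matching ?E M" "finite M" by blast
    have "card M \<le> (n * (q - q mod \<Delta>)) div r"
      by (rule upper[OF assms(1) assms(3) assms(2) M(2) M(3)])
    then show "y \<le> N" using M(1) target by simp
  qed
  have NS: "N \<in> ?S" using Mcm fMc cMc by blast
  have "?S \<subseteq> {..N}" using bound by blast
  then have fS: "finite ?S" by (rule finite_subset) simp
  have "Max ?S = N" by (rule Max_eqI[OF fS]) (use bound NS in blast)+
  then show ?thesis unfolding matching_number_def target .
qed

end
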